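(* Let $E$ and $F$ be complex Banach spaces, let $A_m:\mathrm{dom}(A_m)\subseteq E\to E$ and $B:\mathrm{dom}(B)\subseteq F\to F$ be linear operators, and let $L:\mathrm{dom}(A_m)\to F$ be linear, surjective and bounded with respect to the graph norm of $A_m$. Assume that the restriction $A_0$ of $A_m$ to $\ker(L)$ generates a strongly continuous semigroup $(T_0(t))_{t\ge0}$ on $E$, that $B$ generates a strongly continuous semigroup $(S(t))_{t\ge0}$ on $F$, that $x\mapsto(A_mx,Lx)$, $\mathrm{dom}(A_m)\to E\times F$, is closed, and that $A_0$ and $B$ are boundedly invertible. Let $D_0:=(L|_{\ker(A_m)})^{-1}:F\to E$. For $y\in\mathrm{dom}(B)$ and $t\ge0$ let $Q(t)y=D_0S(t)y-T_0(t)D_0y-\int_0^tT_0(t-s)D_0S(s)By\,\mathrm{d}s$, and assume that each $Q(t)$ extends to a bounded operator $F\to E$ with $\limsup_{t\downarrow0}\|Q(t)\|<\infty$; let $\mathcal{T}(t)=\begin{pmatrix}T_0(t)&Q(t)\\0&S(t)\end{pmatrix}$ on $E\times F$, normed by $\|(x,y)\|=\|x\|+\|y\|$. For each $\tau>0$ let $V(\tau):\mathrm{dom}(B)\to E$ be linear, $\mathbb{T}(\tau)=\begin{pmatrix}T_0(\tau)&V(\tau)\\0&S(\tau)\end{pmatrix}$, $V_n(\tau)=\sum_{j=0}^{n-1}T_0((n-1-j)\tau)V(\tau)S(j\tau)$, and $\mathcal{R}_0=\begin{pmatrix}I&-D_0\\0&I\end{pmatrix}$. Let $D\subseteq\mathrm{dom}(B)$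 be a subspace equipped with a norm $\|\cdot\|_D$, let $r\ge0$, $t_{\max}>0$ and $C\ge0$ be such that for every $y\in D$, every $t\in[0,t_{\max}]$ and every integer $n\ge1$ \[ \Bigl\|V_n(\tfrac tn)y+\int_0^tT_0(t-s)D_0S(s)By\,\mathrm{d}s\Bigr\|\le\frac{Ct^r\log(n)}{n^r}\|y\|_D. \] Then for every $x\in E$, $y\in D$, $t\in[0,t_{\max}]$ and integer $n\ge1$, \[ \Bigl\|\mathcal{R}_0^{-1}\mathbb{T}(\tfrac tn)^n\mathcal{R}_0\binom{x}{y}-\mathcal{T}(t)\binom{x}{y}\Bigr\|\le\frac{Ct^r\log(n)}{n^r}\|y\|_D. \] In particular, for every $p\in(0,r)$ and every $\boldsymbol{u}_0\in E\times D$ there is $C'\ge0$ with $\|\mathcal{T}(t)\boldsymbol{u}_0-\mathcal{R}_0^{-1}\mathbb{T}(\tfrac tn)^n\mathcal{R}_0\boldsymbol{u}_0\|\le C'n^{-p}$ for all $t\in[0,t_{\max}]$ and all integers $n\ge1$.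
   Context: Under the stated assumptions $D_0$ is bounded and $(\mathcal{T}(t))_{t\ge0}$ is the $C_0$-semigroup generated by $\mathrm{diag}(A_m,B)$ with domain $\{(x,y)\in\mathrm{dom}(A_m)\times\mathrm{dom}(B):Lx=y\}$. *)

theory Defs
  imports "HOL-Analysis.Analysis"
begin

definition linear_op_on :: "'a::real_vector set \<Rightarrow> ('a \<Rightarrow> 'b::real_vector) \<Rightarrow> bool" where
  "linear_op_on D f \<longleftrightarrow>
     (\<forall>x\<in>D. \<forall>y\<in>D. f (x + y) = f x + f y) \<and> (\<forall>c. \<forall>x\<in>D. f (c *\<^sub>R x) = c *\<^sub>R f x)"

definition c0_semigroup :: "(real \<Rightarrow> 'a::banach \<Rightarrow> 'a) \<Rightarrow> bool" where
  "c0_semigroup T \<longleftrightarrow>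
     (\<forall>t\<ge>0. bounded_linear (T t)) \<and> T 0 = id \<and>
     (\<forall>s\<ge>0. \<forall>t\<ge>0. T (s + t) = T s \<circ> T t) \<and>
     (\<forall>x. continuous_on {0..} (\<lambda>t. T t x))"

definition generates :: "'a::banach set \<Rightarrow> ('a \<Rightarrow> 'a) \<Rightarrow> (real \<Rightarrow> 'a \<Rightarrow> 'a) \<Rightarrow> bool" where
  "generates D A T \<longleftrightarrow>
     c0_semigroup T \<and>
     D = {x. \<exists>l. ((\<lambda>h. (1 / h) *\<^sub>R (T h x - x)) \<longlongrightarrow> l) (at_right 0)} \<and>
     (\<forall>x\<in>D. ((\<lambda>h. (1 / h) *\<^sub>R (T h x - x)) \<longlongrightarrow> A x) (at_right 0))"

definition boundedly_invertible :: "'a::real_normed_vector set \<Rightarrow> ('a \<Rightarrow> 'b::real_normed_vector) \<Rightarrow> bool" where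
  "boundedly_invertible D A \<longleftrightarrow>
     bij_betw A D UNIV \<and> bounded_linear (the_inv_into D A)"

definition pnorm :: "'a::real_normed_vector \<times> 'b::real_normed_vector \<Rightarrow> real" where
  "pnorm u = norm (fst u) + norm (snd u)"

end

theory Submission
  imports Defs
begin

lemma sg_comp:
  assumes "c0_semigroup T" "s \<ge> 0" "t \<ge> 0"
  shows "T s (T t x) = T (s + t) x"
  using assms unfolding c0_semigroup_def by simp

lemma sg_lin:
  assumes "c0_semigroup T" "t \<ge> 0"
  shows "linear (T t)"
  using assms unfolding c0_semigroup_def by (simp add: bounded_linear.linear)

lemma sg_zero:
  assumes "c0_semigroup T"
  shows "T 0 x = x"
  using assms unfolding c0_semigroup_def by simp

lemma bbT_pow:
  fixes T0 :: "real \<Rightarrow> 'e::banach \<Rightarrow> 'e" and S :: "real \<Rightarrow> 'f::banach \<Rightarrow> 'f"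
  assumes T0: "c0_semigroup T0" and S: "c0_semigroup S" and tau: "\<tau> \<ge> 0"
    and bbT_def: "\<forall>\<tau> x y. bbT \<tau> (x, y) = (T0 \<tau> x + V \<tau> y, S \<tau> y)"
    and Vn_def: "\<forall>n \<tau> y. Vn n \<tau> y =
        (\<Sum>j<n. T0 (real (n - 1 - j) * \<tau>) (V \<tau> (S (real j * \<tau>) y)))"
  shows "(bbT \<tau> ^^ n) (a, y) = (T0 (real n * \<tau>) a + Vn n \<tau> y, S (real n * \<tau>) y)"
proof (induction n)
  case 0
  then show ?case using Vn_def sg_zero[OF T0] sg_zero[OF S] by simp
next
  case (Suc n)
  have l: "linear (T0 \<tau>)" by (rule sg_lin[OF T0 tau])
  have e1: "T0 \<tau> (T0 (real n * \<tau>) a) = T0 (real (Suc n) * \<tau>) a"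
    using sg_comp[OF T0 tau, of "real n * \<tau>"] tau by (simp add: algebra_simps)
  have e2: "S \<tau> (S (real n * \<tau>) y) = S (real (Suc n) * \<tau>) y"
    using sg_comp[OF S tau, of "real n * \<tau>"] tau by (simp add: algebra_simps)
  have e3: "T0 \<tau> (Vn n \<tau> y) + V \<tau> (S (real n * \<tau>) y) = Vn (Suc n) \<tau> y"
  proof -
    have "T0 \<tau> (Vn n \<tau> y) = (\<Sum>j<n. T0 \<tau> (T0 (real (n - 1 - j) * \<tau>) (V \<tau> (S (real j * \<tau>) y))))"
      using Vn_def linear_sum[OF l] by simp
    also have "\<dots> = (\<Sum>j<n. T0 (real (Suc n - 1 - j) * \<tau>) (V \<tau> (S (real j * \<tau>) y)))"
    proof (rule sum.cong[OF refl])
      fix j assume "j \<in> {..<n}"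
      then have "real (Suc n - 1 - j) * \<tau> = \<tau> + real (n - 1 - j) * \<tau>"
        by (simp add: of_nat_diff algebra_simps)
      then show "T0 \<tau> (T0 (real (n - 1 - j) * \<tau>) (V \<tau> (S (real j * \<tau>) y))) =
          T0 (real (Suc n - 1 - j) * \<tau>) (V \<tau> (S (real j * \<tau>) y))"
        using sg_comp[OF T0 tau, of "real (n - 1 - j) * \<tau>"] tau by simp
    qed
    finally show ?thesis using Vn_def sg_zero[OF T0] by simp
  qed
  show ?case using Suc e1 e2 e3 bbT_def by (simp add: linear_add[OF l])
qed

theorem proposition4p3:
  fixes domAm :: "'e::banach set" and Am :: "'e \<Rightarrow> 'e"
    and domB :: "'f::banach set" and B :: "'f \<Rightarrow> 'f"
    and L :: "'e \<Rightarrow> 'f"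
    and T0 :: "real \<Rightarrow> 'e \<Rightarrow> 'e" and S :: "real \<Rightarrow> 'f \<Rightarrow> 'f"
    and D0 :: "'f \<Rightarrow> 'e"
    and Q :: "real \<Rightarrow> 'f \<Rightarrow> 'e"
    and calT :: "real \<Rightarrow> 'e \<times> 'f \<Rightarrow> 'e \<times> 'f"
    and V :: "real \<Rightarrow> 'f \<Rightarrow> 'e"
    and bbT :: "real \<Rightarrow> 'e \<times> 'f \<Rightarrow> 'e \<times> 'f"
    and Vn :: "nat \<Rightarrow> real \<Rightarrow> 'f \<Rightarrow> 'e"
    and R0 :: "'e \<times> 'f \<Rightarrow> 'e \<times> 'f"
    and D :: "'f set" and normD :: "'f \<Rightarrow> real"
    and r tmax C :: real
  assumes domAm_sub: "subspace domAm" and Am_lin: "linear_op_on domAm Am"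
    and domB_sub: "subspace domB" and B_lin: "linear_op_on domB B"
    and L_lin: "linear_op_on domAm L"
    and L_surj: "L ` domAm = UNIV"
    and L_bdd: "\<exists>K. \<forall>x\<in>domAm. norm (L x) \<le> K * (norm x + norm (Am x))"
    and A0_gen: "generates {x\<in>domAm. L x = 0} Am T0"
    and B_gen: "generates domB B S"
    and closed_AmL: "closed {(x, (Am x, L x)) | x. x \<in> domAm}"
    and A0_inv: "boundedly_invertible {x\<in>domAm. L x = 0} Am"
    and B_inv: "boundedly_invertible domB B"
    and D0_def: "D0 = the_inv_into {x\<in>domAm. Am x = 0} L"
    and Q_ext: "\<forall>t\<ge>0. bounded_linear (Q t) \<and>
        (\<forall>y\<in>domB. Q t y = D0 (S t y) - T0 t (D0 y)
                           - integral {0..t} (\<lambda>s. T0 (t - s) (D0 (S s (B y)))))"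
    and Q_limsup: "Limsup (at_right 0) (\<lambda>t. ereal (onorm (Q t))) < \<infinity>"
    and calT_def: "\<forall>t x y. calT t (x, y) = (T0 t x + Q t y, S t y)"
    and V_lin: "\<forall>\<tau>>0. linear_op_on domB (V \<tau>)"
    and bbT_def: "\<forall>\<tau> x y. bbT \<tau> (x, y) = (T0 \<tau> x + V \<tau> y, S \<tau> y)"
    and Vn_def: "\<forall>n \<tau> y. Vn n \<tau> y =
        (\<Sum>j<n. T0 (real (n - 1 - j) * \<tau>) (V \<tau> (S (real j * \<tau>) y)))"
    and R0_def: "\<forall>x y. R0 (x, y) = (x - D0 y, y)"
    and D_sub: "subspace D" and D_domB: "D \<subseteq> domB"
    and normD_nonneg: "\<forall>y\<in>D. 0 \<le> normD y"
    and normD_zero: "\<forall>y\<in>D. normD y = 0 \<longleftrightarrow> y = 0"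
    and normD_hom: "\<forall>c. \<forall>y\<in>D. normD (c *\<^sub>R y) = \<bar>c\<bar> * normD y"
    and normD_tri: "\<forall>y\<in>D. \<forall>z\<in>D. normD (y + z) \<le> normD y + normD z"
    and r_nonneg: "0 \<le> r" and tmax_pos: "0 < tmax" and C_nonneg: "0 \<le> C"
    and V_est: "\<forall>y\<in>D. \<forall>t\<in>{0..tmax}. \<forall>n::nat. n \<ge> 1 \<longrightarrow>
        norm (Vn n (t / real n) y + integral {0..t} (\<lambda>s. T0 (t - s) (D0 (S s (B y)))))
          \<le> C * (if r = 0 then 1 else t powr r) * ln (real n) / real n powr r * normD y"
  shows "(\<forall>x. \<forall>y\<in>D. \<forall>t\<in>{0..tmax}. \<forall>n::nat. n \<ge> 1 \<longrightarrow>
            pnorm ((inv R0 \<circ> (bbT (t / real n) ^^ n) \<circ> R0) (x, y) - calT t (x, y))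
              \<le> C * (if r = 0 then 1 else t powr r) * ln (real n) / real n powr r * normD y)
       \<and> (\<forall>p. 0 < p \<and> p < r \<longrightarrow>
            (\<forall>u0. fst u0 \<in> UNIV \<and> snd u0 \<in> D \<longrightarrow>
              (\<exists>C'\<ge>0. \<forall>t\<in>{0..tmax}. \<forall>n::nat. n \<ge> 1 \<longrightarrow>
                 pnorm (calT t u0 - (inv R0 \<circ> (bbT (t / real n) ^^ n) \<circ> R0) u0)
                   \<le> C' * real n powr (- p))))"
proof -
  have T0s: "c0_semigroup T0" using A0_gen unfolding generates_def by simp
  have Ss: "c0_semigroup S" using B_gen unfolding generates_def by simp
  have R0inj: "inj R0"
  proof (rule injI)
    fix u v assume "R0 u = R0 v"
    then show "u = v" using R0_def by (cases u, cases v) auto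
  qed
  have invR0: "inv R0 (a, b) = (a + D0 b, b)" for a b
  proof -
    have "R0 (a + D0 b, b) = (a, b)" using R0_def by simp
    then show ?thesis using inv_f_f[OF R0inj, of "(a + D0 b, b)"] by simp
  qed
  define I where "I = (\<lambda>t y. integral {0..t} (\<lambda>s. T0 (t - s) (D0 (S s (B y)))))"
  have key: "(inv R0 \<circ> (bbT (t / real n) ^^ n) \<circ> R0) (x, y) - calT t (x, y)
      = (Vn n (t / real n) y + I t y, 0)"
    if y: "y \<in> D" and t: "t \<in> {0..tmax}" and n: "n \<ge> 1" for x y t n
  proof -
    have t0: "t \<ge> 0" using t by simp
    have tau: "t / real n \<ge> 0" using t0 by simp
    have nt: "real n * (t / real n) = t" using n by simp
    have lin: "linear (T0 t)" by (rule sg_lin[OF T0s t0])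
    have yB: "y \<in> domB" using y D_domB by auto
    have Q: "Q t y = D0 (S t y) - T0 t (D0 y) - I t y"
      using Q_ext t0 yB unfolding I_def by blast
    have "(inv R0 \<circ> (bbT (t / real n) ^^ n) \<circ> R0) (x, y)
        = (T0 t (x - D0 y) + Vn n (t / real n) y + D0 (S t y), S t y)"
      using bbT_pow[OF T0s Ss tau bbT_def Vn_def, of n "x - D0 y" y] R0_def nt invR0
      by simp
    then show ?thesis using calT_def Q by (simp add: linear_diff[OF lin] I_def algebra_simps)
  qed
  have part1: "\<forall>x. \<forall>y\<in>D. \<forall>t\<in>{0..tmax}. \<forall>n::nat. n \<ge> 1 \<longrightarrow>
            pnorm ((inv R0 \<circ> (bbT (t / real n) ^^ n) \<circ> R0) (x, y) - calT t (x, y))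
              \<le> C * (if r = 0 then 1 else t powr r) * ln (real n) / real n powr r * normD y"
  proof (intro allI ballI impI)
    fix x y t and n :: nat assume y: "y \<in> D" and t: "t \<in> {0..tmax}" and n: "n \<ge> 1"
    show "pnorm ((inv R0 \<circ> (bbT (t / real n) ^^ n) \<circ> R0) (x, y) - calT t (x, y))
              \<le> C * (if r = 0 then 1 else t powr r) * ln (real n) / real n powr r * normD y"
      using key[OF y t n, of x] V_est y t n unfolding pnorm_def I_def by simp
  qed
  have part2: "\<forall>p. 0 < p \<and> p < r \<longrightarrow>
            (\<forall>u0. fst u0 \<in> UNIV \<and> snd u0 \<in> D \<longrightarrow>
              (\<exists>C'\<ge>0. \<forall>t\<in>{0..tmax}. \<forall>n::nat. n \<ge> 1 \<longrightarrow>
                 pnorm (calT t u0 - (inv R0 \<circ> (bbT (t / real n) ^^ n) \<circ> R0) u0)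
                   \<le> C' * real n powr (- p)))"
  proof (intro allI impI)
    fix p :: real and u0 :: "'e \<times> 'f"
    assume p: "0 < p \<and> p < r" and u: "fst u0 \<in> UNIV \<and> snd u0 \<in> D"
    obtain x y where u0: "u0 = (x, y)" by (cases u0)
    have y: "y \<in> D" using u u0 by simp
    have r0: "r \<noteq> 0" using p by simp
    define q where "q = r - p"
    have q: "q > 0" using p q_def by simp
    have nd: "normD y \<ge> 0" using normD_nonneg y by simp
    define C' where "C' = C * tmax powr r * normD y / q"
    show "\<exists>C'\<ge>0. \<forall>t\<in>{0..tmax}. \<forall>n::nat. n \<ge> 1 \<longrightarrow>
                 pnorm (calT t u0 - (inv R0 \<circ> (bbT (t / real n) ^^ n) \<circ> R0) u0)
                   \<le> C' * real n powr (- p)"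
    proof (intro exI[of _ C'] conjI ballI allI impI)
      show "C' \<ge> 0" unfolding C'_def using C_nonneg nd q by simp
      fix t and n :: nat assume t: "t \<in> {0..tmax}" and n: "n \<ge> 1"
      have rn: "real n \<ge> 1" using n by simp
      have "pnorm (calT t u0 - (inv R0 \<circ> (bbT (t / real n) ^^ n) \<circ> R0) u0)
          = pnorm ((inv R0 \<circ> (bbT (t / real n) ^^ n) \<circ> R0) (x, y) - calT t (x, y))"
        unfolding pnorm_def u0 by (simp add: norm_minus_commute)
      also have "\<dots> \<le> C * t powr r * ln (real n) / real n powr r * normD y"
        using part1 y t n r0 by auto
      also have "\<dots> \<le> C' * real n powr (- p)"
      proof -
        have lnb: "ln (real n) \<le> real n powr q / q"
        proof -
          have "ln (real n powr q) \<le> real n powr q - 1"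
            by (rule ln_le_minus_one) (use rn in simp)
          moreover have "ln (real n powr q) = q * ln (real n)" using rn by (simp add: ln_powr)
          ultimately have "q * ln (real n) \<le> real n powr q" by simp
          then show ?thesis using q by (simp add: field_simps)
        qed
        have tp: "t powr r \<le> tmax powr r" using t p by (intro powr_mono2) auto
        have ln0: "ln (real n) \<ge> 0" using rn by simp
        have "C * t powr r * ln (real n) / real n powr r * normD y
            \<le> C * tmax powr r * (real n powr q / q) / real n powr r * normD y"
          using tp lnb C_nonneg nd ln0 rn
          by (intro mult_right_mono divide_right_mono mult_mono mult_left_mono) auto
        also have "\<dots> = C' * real n powr (- p)"
        proof -
          have "real n powr q / real n powr r = real n powr (- p)"
            using rn by (simp add: q_def powr_diff[symmetric])
          then show ?thesis unfolding C'_def by (simp add: divide_inverse mult_ac)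
        qed
        finally show ?thesis .
      qed
      finally show "pnorm (calT t u0 - (inv R0 \<circ> (bbT (t / real n) ^^ n) \<circ> R0) u0)
                   \<le> C' * real n powr (- p)" .
    qed
  qed
  show ?thesis using part1 part2 by blast
qed

end
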